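(* The five families of test equations for polycyclic presentations are irredundant: for each $t\in\{1,2,3,4,5\}$ there exists a polycyclic presentation for which some test equation of type (T$t$) fails while all test equations of the other four types hold, where the types are (T1) $c(g_j\,g^{a_{j,k}}\,g_i)=c(g_kg_jg_i)$ for $k>j>i$; (T2) $c(g_j^{r_j}g_i)=c(g^{e_j}g_i)$ for $r_j<\infty$, $j>i$; (T3) $c(g_jg_i^{r_i})=c(g_j\,g^{e_i})$ for $r_i<\infty$, $j>i$; (T4) $c(g_jg_i^{-1}g_i)=c(g_j)$ for $r_i=\infty$, $j>i$; (T5) $c(g_i^{r_i+1})=c(g_i\,g^{e_i})$ for $r_i<\infty$. In particular, no proper subset of these families suffices to detect inconsistency in general.
   Context: A polycyclic presentation $\mathcal P$ on generators $g_1,\ldots,g_n$ consists of $r_1,\ldots,r_n\in\mathbb N\cup\{\infty\}$ and integers $e_{i,k},a_{i,j,k},b_{i,j,k}$ ($1\le i<j\le n$, $1\le k\le n$) with $0\le e_{i,k},a_{i,j,k},b_{i,j,k}<r_k$ whenever $r_k<\infty$, and has defining relations $g_i^{r_i}=g^{e_i}$ (for $r_i<\infty$), $g_jg_i=g_ig^{a_{i,j}}$ (for $i<j$), $g_jg_i^{-1}=g_i^{-1}g^{b_{i,j}}$ (for $i<j$, $r_i=\infty$), where $g^{e_i}=g_{i+1}^{e_{i,i+1}}\cdots g_n^{e_{i,n}}$, $g^{a_{i,j}}=g_{i+1}^{a_{i,j,i+1}}\cdots g_n^{a_{i,j,n}}$, $g^{b_{i,j}}=g_{i+1}^{b_{i,j,i+1}}\cdots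 g_n^{b_{i,j,n}}$ (with $g_k^x$ for $x<0$ meaning $(g_k^{-1})^{|x|}$). From the presentation one computes integers $c_{i,j,k},d_{i,j,k},f_{i,k}$ (in $[0,r_k)$ when $r_k<\infty$) such that in the presented group $g_j^{-1}g_i=g_ig^{c_{i,j}}$ ($i<j$, $r_j=\infty$), $g_j^{-1}g_i^{-1}=g_i^{-1}g^{d_{i,j}}$ ($i<j$, $r_i=r_j=\infty$), $g_i^{-1}=g_i^{r_i-1}g^{f_i}$ ($r_i<\infty$). Let $M$ be the free monoid on $\{g_1^{\pm1},\ldots,g_n^{\pm1}\}$. A collection step replaces a subword equal to the left-hand side of one of these six kinds of relations by its right-hand side, or deletes $g_ig_i^{-1}$ or $g_i^{-1}g_i$; a word admitting no step is reduced. The collection-to-the-left algorithm applies steps, always choosing the leftmost occurrence of a non-reduced subword involving a generator of smallest index (lower index has priority), until the word is reduced; $c\colon M\to M$ maps a word to the result. A presentation is consistent if every element of the presented group is represented by exactly one reduced word. *)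

theory Defs
  imports Main
begin

text \<open>Letters of the free monoid M: (k, True) is g_k, (k, False) is g_k^{-1}.\<close>
type_synonym gword = "(nat \<times> bool) list"

text \<open>A polycyclic presentation on generators g_1..g_n.
  prel k = None means r_k = infinity, prel k = Some r means r_k = r.
  pexp i k = e_{i,k},  pconj i j k = a_{i,j,k},  piconj i j k = b_{i,j,k}.\<close>
record pcp =
  ngen :: nat
  prel :: "nat \<Rightarrow> nat option"
  pexp :: "nat \<Rightarrow> nat \<Rightarrow> int"
  pconj :: "nat \<Rightarrow> nat \<Rightarrow> nat \<Rightarrow> int"
  piconj :: "nat \<Rightarrow> nat \<Rightarrow> nat \<Rightarrow> int"

definition in_range :: "pcp \<Rightarrow> nat \<Rightarrow> int \<Rightarrow> bool" where
  "in_range P k x = (case prel P k of None \<Rightarrow> True | Some r \<Rightarrow> 0 \<le> x \<and> x < int r)"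

definition is_pcp :: "pcp \<Rightarrow> bool" where
  "is_pcp P = (let n = ngen P in
     (\<forall>k\<in>{1..n}. \<forall>r. prel P k = Some r \<longrightarrow> r \<ge> 1) \<and>
     (\<forall>i\<in>{1..n}. \<forall>k\<in>{1..n}. in_range P k (pexp P i k)) \<and>
     (\<forall>i j k. 1 \<le> i \<and> i < j \<and> j \<le> n \<and> 1 \<le> k \<and> k \<le> n \<longrightarrow>
        in_range P k (pconj P i j k) \<and> in_range P k (piconj P i j k)))"

definition gpow :: "nat \<Rightarrow> int \<Rightarrow> gword" where
  "gpow k x = (if 0 \<le> x then replicate (nat x) (k, True) else replicate (nat (- x)) (k, False))"

definition gvec :: "pcp \<Rightarrow> (nat \<Rightarrow> int) \<Rightarrow> nat \<Rightarrow> gword" where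
  "gvec P v i = concat (map (\<lambda>k. gpow k (v k)) [Suc i..<Suc (ngen P)])"

definition winv :: "gword \<Rightarrow> gword" where
  "winv w = rev (map (\<lambda>(k, s). (k, \<not> s)) w)"

definition wexp :: "gword \<Rightarrow> nat \<Rightarrow> int" where
  "wexp w k = int (count_list w (k, True)) - int (count_list w (k, False))"

type_synonym tables = "(nat \<Rightarrow> nat \<Rightarrow> nat \<Rightarrow> int) \<times> (nat \<Rightarrow> nat \<Rightarrow> nat \<Rightarrow> int) \<times> (nat \<Rightarrow> nat \<Rightarrow> int)"

definition tc :: "tables \<Rightarrow> nat \<Rightarrow> nat \<Rightarrow> nat \<Rightarrow> int" where "tc T = fst T"
definition td :: "tables \<Rightarrow> nat \<Rightarrow> nat \<Rightarrow> nat \<Rightarrow> int" where "td T = fst (snd T)"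
definition tf :: "tables \<Rightarrow> nat \<Rightarrow> nat \<Rightarrow> int" where "tf T = snd (snd T)"

text \<open>A two-letter conjugation redex starting at p
  involves the smaller generator of the next letter and therefore has priority over the
  redexes starting at p that only involve the generator of the letter at p.  Among the
  latter (which all have the same index), free cancellation is preferred.\<close>
definition redex :: "pcp \<Rightarrow> tables \<Rightarrow> gword \<Rightarrow> nat \<Rightarrow> (nat \<times> gword) option" where
  "redex P T w p =
    (if length w \<le> p then None else
     (let j = fst (w ! p); sj = snd (w ! p); pre = take p w;
          hasnext = Suc p < length w;
          i = fst (w ! Suc p); si = snd (w ! Suc p);
          pair = (if \<not> hasnext \<or> \<not> i < j then None
                  else if sj \<and> si then Some ((i, True) # gvec P (pconj P i j) i)
                  else if sj \<and> \<not> si \<and> prel P i = None then Some ((i, False) # gvec P (piconj P i j) i)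
                  else if \<not> sj \<and> si \<and> prel P j = None then Some ((i, True) # gvec P (tc T i j) i)
                  else if \<not> sj \<and> \<not> si \<and> prel P i = None \<and> prel P j = None
                    then Some ((i, False) # gvec P (td T i j) i)
                  else None)
      in case pair of
           Some rhs \<Rightarrow> Some (i, pre @ rhs @ drop (Suc (Suc p)) w)
         | None \<Rightarrow>
           (if hasnext \<and> w ! Suc p = (j, \<not> sj) then Some (j, pre @ drop (Suc (Suc p)) w)
            else case prel P j of
              None \<Rightarrow> None
            | Some r \<Rightarrow>
                (if sj then
                   (if p + r \<le> length w \<and> take r (drop p w) = replicate r (j, True)
                    then Some (j, pre @ gvec P (pexp P j) j @ drop (p + r) w) else None)
                 else Some (j, pre @ replicate (r - 1) (j, True) @ gvec P (tf T j) j @ drop (Suc p) w)))))"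

definition cstep :: "pcp \<Rightarrow> tables \<Rightarrow> gword \<Rightarrow> gword option" where
  "cstep P T w =
    (let ps = filter (\<lambda>p. redex P T w p \<noteq> None) [0..<length w] in
     if ps = [] then None else
     (let m = Min (set (map (\<lambda>p. fst (the (redex P T w p))) ps));
          p = hd (filter (\<lambda>p. fst (the (redex P T w p)) = m) ps)
      in Some (snd (the (redex P T w p)))))"

inductive collects :: "pcp \<Rightarrow> tables \<Rightarrow> gword \<Rightarrow> gword \<Rightarrow> bool" for P T where
  coll_done: "cstep P T w = None \<Longrightarrow> collects P T w w"
| coll_step: "cstep P T w = Some w' \<Longrightarrow> collects P T w' v \<Longrightarrow> collects P T w v"

definition coll :: "pcp \<Rightarrow> tables \<Rightarrow> gword \<Rightarrow> gword" where
  "coll P T w = (THE v. collects P T w v)"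

text \<open>Computation of c, d, f from top index down: for index i,
  g^{c_{i,j}} = collected (g^{a_{i,j}})^{-1},  g^{d_{i,j}} = collected (g^{b_{i,j}})^{-1},
  g^{f_i} = collected (g^{e_i})^{-1}; these only involve generators of index > i,
  whose tables have already been computed.\<close>
fun tabs :: "pcp \<Rightarrow> nat \<Rightarrow> tables" where
  "tabs P 0 = (\<lambda>_ _ _. 0, \<lambda>_ _ _. 0, \<lambda>_ _. 0)"
| "tabs P (Suc m) =
    (let T = tabs P m; i = ngen P - m in
     (\<lambda>i' j k. if i' = i then wexp (coll P T (winv (gvec P (pconj P i j) i))) k else tc T i' j k,
      \<lambda>i' j k. if i' = i then wexp (coll P T (winv (gvec P (piconj P i j) i))) k else td T i' j k,
      \<lambda>i' k. if i' = i then wexp (coll P T (winv (gvec P (pexp P i) i))) k else tf T i' k))"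

definition collect :: "pcp \<Rightarrow> gword \<Rightarrow> gword" where
  "collect P w = coll P (tabs P (ngen P)) w"

definition gen :: "nat \<Rightarrow> nat \<times> bool" where "gen k = (k, True)"
definition geninv :: "nat \<Rightarrow> nat \<times> bool" where "geninv k = (k, False)"

definition T1 :: "pcp \<Rightarrow> bool" where
  "T1 P = (\<forall>i j k. 1 \<le> i \<and> i < j \<and> j < k \<and> k \<le> ngen P \<longrightarrow>
     collect P ([gen j] @ gvec P (pconj P j k) j @ [gen i]) = collect P [gen k, gen j, gen i])"

definition T2 :: "pcp \<Rightarrow> bool" where
  "T2 P = (\<forall>i j r. 1 \<le> i \<and> i < j \<and> j \<le> ngen P \<and> prel P j = Some r \<longrightarrow>
     collect P (replicate r (gen j) @ [gen i]) = collect P (gvec P (pexp P j) j @ [gen i]))"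

definition T3 :: "pcp \<Rightarrow> bool" where
  "T3 P = (\<forall>i j r. 1 \<le> i \<and> i < j \<and> j \<le> ngen P \<and> prel P i = Some r \<longrightarrow>
     collect P (gen j # replicate r (gen i)) = collect P (gen j # gvec P (pexp P i) i))"

definition T4 :: "pcp \<Rightarrow> bool" where
  "T4 P = (\<forall>i j. 1 \<le> i \<and> i < j \<and> j \<le> ngen P \<and> prel P i = None \<longrightarrow>
     collect P [gen j, geninv i, gen i] = collect P [gen j])"

definition T5 :: "pcp \<Rightarrow> bool" where
  "T5 P = (\<forall>i r. 1 \<le> i \<and> i \<le> ngen P \<and> prel P i = Some r \<longrightarrow>
     collect P (replicate (Suc r) (gen i)) = collect P (gen i # gvec P (pexp P i) i))"

definition test_eqs :: "pcp \<Rightarrow> nat \<Rightarrow> bool" where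
  "test_eqs P t = (if t = 1 then T1 P else if t = 2 then T2 P else if t = 3 then T3 P
                   else if t = 4 then T4 P else T5 P)"

end

theory Submission
  imports Defs
begin

lemma coll_unfold:
  "coll P T w = (case cstep P T w of None \<Rightarrow> w | Some w' \<Rightarrow> coll P T w')"
proof (cases "cstep P T w")
  case None
  have "collects P T w v \<longleftrightarrow> v = w" for v
  proof
    assume "collects P T w v" then show "v = w"
      by (cases rule: collects.cases) (use None in auto)
  next
    assume "v = w" then show "collects P T w v" using None by (auto intro: coll_done)
  qed
  then show ?thesis using None by (simp add: coll_def)
next
  case (Some w')
  have "collects P T w v \<longleftrightarrow> collects P T w' v" for v
  proof
    assume "collects P T w v" then show "collects P T w' v"
      by (cases rule: collects.cases) (use Some in auto)
  next
    assume "collects P T w' v" then show "collects P T w v" using Some by (auto intro: coll_step)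
  qed
  then show ?thesis using Some by (simp add: coll_def)
qed

lemma rep_unf: "replicate n x = (if n = 0 then [] else x # replicate (n - 1) x)"
  by (cases n) auto

lemmas csimps = cstep_def redex_def gvec_def gpow_def Let_def upt_rec rep_unf

definition E1 :: pcp where "E1 = \<lparr>ngen = 3,
  prel = (\<lambda>k. (if k = 1 then Some 2 else (if k = 2 then Some 2 else (if k = 3 then Some 4 else None)))),
  pexp = (\<lambda>i k. 0),
  pconj = (\<lambda>i j k. (if i = 1 \<and> j = 2 \<and> k = 2 then 1 else (if i = 1 \<and> j = 3 \<and> k = 2 then 1 else (if i = 1 \<and> j = 3 \<and> k = 3 then 1 else (if i = 2 \<and> j = 3 \<and> k = 3 then 3 else 0))))),
  piconj = (\<lambda>i j k. 0)\<rparr>"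

lemma E1_f:
  "ngen E1 = 3"
  "prel E1 = (\<lambda>k. (if k = 1 then Some 2 else (if k = 2 then Some 2 else (if k = 3 then Some 4 else None))))"
  "pexp E1 = (\<lambda>i k. 0)"
  "pconj E1 = (\<lambda>i j k. (if i = 1 \<and> j = 2 \<and> k = 2 then 1 else (if i = 1 \<and> j = 3 \<and> k = 2 then 1 else (if i = 1 \<and> j = 3 \<and> k = 3 then 1 else (if i = 2 \<and> j = 3 \<and> k = 3 then 3 else 0)))))"
  "piconj E1 = (\<lambda>i j k. 0)"
  by (simp_all add: E1_def)

lemma E1_pcp: "is_pcp E1"
  unfolding is_pcp_def in_range_def Let_def E1_f
  by (auto split: if_splits option.splits)

lemma E1_nT1: "\<not> (\<forall>i j k. 1 \<le> i \<and> i < j \<and> j < k \<and> k \<le> ngen E1 \<longrightarrow> coll E1 T ([gen j] @ gvec E1 (pconj E1 j k) j @ [gen i]) = coll E1 T [gen k, gen j, gen i])"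
  apply (simp only: not_all not_imp)
  apply (rule exI[of _ 1], rule exI[of _ 2], rule exI[of _ 3])
  apply (simp add: E1_f gen_def geninv_def csimps)
  apply ((subst coll_unfold, simp add: E1_f gen_def geninv_def csimps cong: option.case_cong_weak)+)?
  done

lemma E1_T2: "(\<forall>i j r. 1 \<le> i \<and> i < j \<and> j \<le> ngen E1 \<and> prel E1 j = Some r \<longrightarrow> coll E1 T (replicate r (gen j) @ [gen i]) = coll E1 T (gvec E1 (pexp E1 j) j @ [gen i]))"
proof (intro allI impI)
  fix i j r
  assume h: "1 \<le> i \<and> i < j \<and> j \<le> ngen E1 \<and> prel E1 j = Some r"
  then have "(i = 1 \<and> j = 2) \<or> (i = 1 \<and> j = 3) \<or> (i = 2 \<and> j = 3)" unfolding E1_f by arith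
  then show "coll E1 T (replicate r (gen j) @ [gen i]) = coll E1 T (gvec E1 (pexp E1 j) j @ [gen i])"
    using h
    apply ((elim disjE)?; clarsimp simp: E1_f gen_def geninv_def csimps)
    apply ((subst coll_unfold, simp add: E1_f gen_def geninv_def csimps cong: option.case_cong_weak)+)?
    done
qed

lemma E1_T3: "(\<forall>i j r. 1 \<le> i \<and> i < j \<and> j \<le> ngen E1 \<and> prel E1 i = Some r \<longrightarrow> coll E1 T (gen j # replicate r (gen i)) = coll E1 T (gen j # gvec E1 (pexp E1 i) i))"
proof (intro allI impI)
  fix i j r
  assume h: "1 \<le> i \<and> i < j \<and> j \<le> ngen E1 \<and> prel E1 i = Some r"
  then have "(i = 1 \<and> j = 2) \<or> (i = 1 \<and> j = 3) \<or> (i = 2 \<and> j = 3)" unfolding E1_f by arith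
  then show "coll E1 T (gen j # replicate r (gen i)) = coll E1 T (gen j # gvec E1 (pexp E1 i) i)"
    using h
    apply ((elim disjE)?; clarsimp simp: E1_f gen_def geninv_def csimps)
    apply ((subst coll_unfold, simp add: E1_f gen_def geninv_def csimps cong: option.case_cong_weak)+)?
    done
qed

lemma E1_T4: "(\<forall>i j. 1 \<le> i \<and> i < j \<and> j \<le> ngen E1 \<and> prel E1 i = None \<longrightarrow> coll E1 T [gen j, geninv i, gen i] = coll E1 T [gen j])"
proof (intro allI impI)
  fix i j
  assume h: "1 \<le> i \<and> i < j \<and> j \<le> ngen E1 \<and> prel E1 i = None"
  then have "(i = 1 \<and> j = 2) \<or> (i = 1 \<and> j = 3) \<or> (i = 2 \<and> j = 3)" unfolding E1_f by arith
  then show "coll E1 T [gen j, geninv i, gen i] = coll E1 T [gen j]"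
    using h
    apply ((elim disjE)?; clarsimp simp: E1_f gen_def geninv_def csimps)
    apply ((subst coll_unfold, simp add: E1_f gen_def geninv_def csimps cong: option.case_cong_weak)+)?
    done
qed

lemma E1_T5: "(\<forall>i r. 1 \<le> i \<and> i \<le> ngen E1 \<and> prel E1 i = Some r \<longrightarrow> coll E1 T (replicate (Suc r) (gen i)) = coll E1 T (gen i # gvec E1 (pexp E1 i) i))"
proof (intro allI impI)
  fix i r
  assume h: "1 \<le> i \<and> i \<le> ngen E1 \<and> prel E1 i = Some r"
  then have "i = 1 \<or> i = 2 \<or> i = 3" unfolding E1_f by arith
  then show "coll E1 T (replicate (Suc r) (gen i)) = coll E1 T (gen i # gvec E1 (pexp E1 i) i)"
    using h
    apply ((elim disjE)?; clarsimp simp: E1_f gen_def geninv_def csimps)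
    apply ((subst coll_unfold, simp add: E1_f gen_def geninv_def csimps cong: option.case_cong_weak)+)?
    done
qed

definition E2 :: pcp where "E2 = \<lparr>ngen = 3,
  prel = (\<lambda>k. (if k = 1 then None else (if k = 2 then Some 2 else (if k = 3 then Some 3 else None)))),
  pexp = (\<lambda>i k. (if i = 2 \<and> k = 3 then 1 else 0)),
  pconj = (\<lambda>i j k. (if i = 1 \<and> j = 2 \<and> k = 2 then 1 else (if i = 1 \<and> j = 2 \<and> k = 3 then 1 else (if i = 1 \<and> j = 3 \<and> k = 3 then 1 else (if i = 2 \<and> j = 3 \<and> k = 3 then 1 else 0))))),
  piconj = (\<lambda>i j k. (if i = 1 \<and> j = 2 \<and> k = 2 then 1 else (if i = 1 \<and> j = 2 \<and> k = 3 then 2 else (if i = 1 \<and> j = 3 \<and> k = 3 then 1 else 0))))\<rparr>"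

lemma E2_f:
  "ngen E2 = 3"
  "prel E2 = (\<lambda>k. (if k = 1 then None else (if k = 2 then Some 2 else (if k = 3 then Some 3 else None))))"
  "pexp E2 = (\<lambda>i k. (if i = 2 \<and> k = 3 then 1 else 0))"
  "pconj E2 = (\<lambda>i j k. (if i = 1 \<and> j = 2 \<and> k = 2 then 1 else (if i = 1 \<and> j = 2 \<and> k = 3 then 1 else (if i = 1 \<and> j = 3 \<and> k = 3 then 1 else (if i = 2 \<and> j = 3 \<and> k = 3 then 1 else 0)))))"
  "piconj E2 = (\<lambda>i j k. (if i = 1 \<and> j = 2 \<and> k = 2 then 1 else (if i = 1 \<and> j = 2 \<and> k = 3 then 2 else (if i = 1 \<and> j = 3 \<and> k = 3 then 1 else 0))))"
  by (simp_all add: E2_def)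

lemma E2_pcp: "is_pcp E2"
  unfolding is_pcp_def in_range_def Let_def E2_f
  by (auto split: if_splits option.splits)

lemma E2_T1: "(\<forall>i j k. 1 \<le> i \<and> i < j \<and> j < k \<and> k \<le> ngen E2 \<longrightarrow> coll E2 T ([gen j] @ gvec E2 (pconj E2 j k) j @ [gen i]) = coll E2 T [gen k, gen j, gen i])"
proof (intro allI impI)
  fix i j k
  assume h: "1 \<le> i \<and> i < j \<and> j < k \<and> k \<le> ngen E2"
  then have "i = 1 \<and> j = 2 \<and> k = 3" unfolding E2_f by arith
  then show "coll E2 T ([gen j] @ gvec E2 (pconj E2 j k) j @ [gen i]) = coll E2 T [gen k, gen j, gen i]"
    using h
    apply ((elim disjE)?; clarsimp simp: E2_f gen_def geninv_def csimps)
    apply ((subst coll_unfold, simp add: E2_f gen_def geninv_def csimps cong: option.case_cong_weak)+)?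
    done
qed

lemma E2_nT2: "\<not> (\<forall>i j r. 1 \<le> i \<and> i < j \<and> j \<le> ngen E2 \<and> prel E2 j = Some r \<longrightarrow> coll E2 T (replicate r (gen j) @ [gen i]) = coll E2 T (gvec E2 (pexp E2 j) j @ [gen i]))"
  apply (simp only: not_all not_imp)
  apply (rule exI[of _ 1], rule exI[of _ 2], rule exI[of _ 2])
  apply (simp add: E2_f gen_def geninv_def csimps)
  apply ((subst coll_unfold, simp add: E2_f gen_def geninv_def csimps cong: option.case_cong_weak)+)?
  done

lemma E2_T3: "(\<forall>i j r. 1 \<le> i \<and> i < j \<and> j \<le> ngen E2 \<and> prel E2 i = Some r \<longrightarrow> coll E2 T (gen j # replicate r (gen i)) = coll E2 T (gen j # gvec E2 (pexp E2 i) i))"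
proof (intro allI impI)
  fix i j r
  assume h: "1 \<le> i \<and> i < j \<and> j \<le> ngen E2 \<and> prel E2 i = Some r"
  then have "(i = 1 \<and> j = 2) \<or> (i = 1 \<and> j = 3) \<or> (i = 2 \<and> j = 3)" unfolding E2_f by arith
  then show "coll E2 T (gen j # replicate r (gen i)) = coll E2 T (gen j # gvec E2 (pexp E2 i) i)"
    using h
    apply ((elim disjE)?; clarsimp simp: E2_f gen_def geninv_def csimps)
    apply ((subst coll_unfold, simp add: E2_f gen_def geninv_def csimps cong: option.case_cong_weak)+)?
    done
qed

lemma E2_T4: "(\<forall>i j. 1 \<le> i \<and> i < j \<and> j \<le> ngen E2 \<and> prel E2 i = None \<longrightarrow> coll E2 T [gen j, geninv i, gen i] = coll E2 T [gen j])"
proof (intro allI impI)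
  fix i j
  assume h: "1 \<le> i \<and> i < j \<and> j \<le> ngen E2 \<and> prel E2 i = None"
  then have "(i = 1 \<and> j = 2) \<or> (i = 1 \<and> j = 3) \<or> (i = 2 \<and> j = 3)" unfolding E2_f by arith
  then show "coll E2 T [gen j, geninv i, gen i] = coll E2 T [gen j]"
    using h
    apply ((elim disjE)?; clarsimp simp: E2_f gen_def geninv_def csimps)
    apply ((subst coll_unfold, simp add: E2_f gen_def geninv_def csimps cong: option.case_cong_weak)+)?
    done
qed

lemma E2_T5: "(\<forall>i r. 1 \<le> i \<and> i \<le> ngen E2 \<and> prel E2 i = Some r \<longrightarrow> coll E2 T (replicate (Suc r) (gen i)) = coll E2 T (gen i # gvec E2 (pexp E2 i) i))"
proof (intro allI impI)
  fix i r
  assume h: "1 \<le> i \<and> i \<le> ngen E2 \<and> prel E2 i = Some r"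
  then have "i = 1 \<or> i = 2 \<or> i = 3" unfolding E2_f by arith
  then show "coll E2 T (replicate (Suc r) (gen i)) = coll E2 T (gen i # gvec E2 (pexp E2 i) i)"
    using h
    apply ((elim disjE)?; clarsimp simp: E2_f gen_def geninv_def csimps)
    apply ((subst coll_unfold, simp add: E2_f gen_def geninv_def csimps cong: option.case_cong_weak)+)?
    done
qed

definition E3 :: pcp where "E3 = \<lparr>ngen = 2,
  prel = (\<lambda>k. (if k = 1 then Some 2 else (if k = 2 then Some 4 else None))),
  pexp = (\<lambda>i k. 0),
  pconj = (\<lambda>i j k. (if i = 1 \<and> j = 2 \<and> k = 2 then 2 else 0)),
  piconj = (\<lambda>i j k. 0)\<rparr>"

lemma E3_f:
  "ngen E3 = 2"
  "prel E3 = (\<lambda>k. (if k = 1 then Some 2 else (if k = 2 then Some 4 else None)))"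
  "pexp E3 = (\<lambda>i k. 0)"
  "pconj E3 = (\<lambda>i j k. (if i = 1 \<and> j = 2 \<and> k = 2 then 2 else 0))"
  "piconj E3 = (\<lambda>i j k. 0)"
  by (simp_all add: E3_def)

lemma E3_pcp: "is_pcp E3"
  unfolding is_pcp_def in_range_def Let_def E3_f
  by (auto split: if_splits option.splits)

lemma E3_T1: "(\<forall>i j k. 1 \<le> i \<and> i < j \<and> j < k \<and> k \<le> ngen E3 \<longrightarrow> coll E3 T ([gen j] @ gvec E3 (pconj E3 j k) j @ [gen i]) = coll E3 T [gen k, gen j, gen i])"
proof (intro allI impI)
  fix i j k
  assume h: "1 \<le> i \<and> i < j \<and> j < k \<and> k \<le> ngen E3"
  then have "False" unfolding E3_f by arith
  then show "coll E3 T ([gen j] @ gvec E3 (pconj E3 j k) j @ [gen i]) = coll E3 T [gen k, gen j, gen i]"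
    using h
    apply ((elim disjE)?; clarsimp simp: E3_f gen_def geninv_def csimps)
    apply ((subst coll_unfold, simp add: E3_f gen_def geninv_def csimps cong: option.case_cong_weak)+)?
    done
qed

lemma E3_T2: "(\<forall>i j r. 1 \<le> i \<and> i < j \<and> j \<le> ngen E3 \<and> prel E3 j = Some r \<longrightarrow> coll E3 T (replicate r (gen j) @ [gen i]) = coll E3 T (gvec E3 (pexp E3 j) j @ [gen i]))"
proof (intro allI impI)
  fix i j r
  assume h: "1 \<le> i \<and> i < j \<and> j \<le> ngen E3 \<and> prel E3 j = Some r"
  then have "i = 1 \<and> j = 2" unfolding E3_f by arith
  then show "coll E3 T (replicate r (gen j) @ [gen i]) = coll E3 T (gvec E3 (pexp E3 j) j @ [gen i])"
    using h
    apply ((elim disjE)?; clarsimp simp: E3_f gen_def geninv_def csimps)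
    apply ((subst coll_unfold, simp add: E3_f gen_def geninv_def csimps cong: option.case_cong_weak)+)?
    done
qed

lemma E3_nT3: "\<not> (\<forall>i j r. 1 \<le> i \<and> i < j \<and> j \<le> ngen E3 \<and> prel E3 i = Some r \<longrightarrow> coll E3 T (gen j # replicate r (gen i)) = coll E3 T (gen j # gvec E3 (pexp E3 i) i))"
  apply (simp only: not_all not_imp)
  apply (rule exI[of _ 1], rule exI[of _ 2], rule exI[of _ 2])
  apply (simp add: E3_f gen_def geninv_def csimps)
  apply ((subst coll_unfold, simp add: E3_f gen_def geninv_def csimps cong: option.case_cong_weak)+)?
  done

lemma E3_T4: "(\<forall>i j. 1 \<le> i \<and> i < j \<and> j \<le> ngen E3 \<and> prel E3 i = None \<longrightarrow> coll E3 T [gen j, geninv i, gen i] = coll E3 T [gen j])"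
proof (intro allI impI)
  fix i j
  assume h: "1 \<le> i \<and> i < j \<and> j \<le> ngen E3 \<and> prel E3 i = None"
  then have "i = 1 \<and> j = 2" unfolding E3_f by arith
  then show "coll E3 T [gen j, geninv i, gen i] = coll E3 T [gen j]"
    using h
    apply ((elim disjE)?; clarsimp simp: E3_f gen_def geninv_def csimps)
    apply ((subst coll_unfold, simp add: E3_f gen_def geninv_def csimps cong: option.case_cong_weak)+)?
    done
qed

lemma E3_T5: "(\<forall>i r. 1 \<le> i \<and> i \<le> ngen E3 \<and> prel E3 i = Some r \<longrightarrow> coll E3 T (replicate (Suc r) (gen i)) = coll E3 T (gen i # gvec E3 (pexp E3 i) i))"
proof (intro allI impI)
  fix i r
  assume h: "1 \<le> i \<and> i \<le> ngen E3 \<and> prel E3 i = Some r"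
  then have "i = 1 \<or> i = 2" unfolding E3_f by arith
  then show "coll E3 T (replicate (Suc r) (gen i)) = coll E3 T (gen i # gvec E3 (pexp E3 i) i)"
    using h
    apply ((elim disjE)?; clarsimp simp: E3_f gen_def geninv_def csimps)
    apply ((subst coll_unfold, simp add: E3_f gen_def geninv_def csimps cong: option.case_cong_weak)+)?
    done
qed

definition E4 :: pcp where "E4 = \<lparr>ngen = 2,
  prel = (\<lambda>k. (if k = 1 then None else (if k = 2 then None else None))),
  pexp = (\<lambda>i k. 0),
  pconj = (\<lambda>i j k. (if i = 1 \<and> j = 2 \<and> k = 2 then 1 else 0)),
  piconj = (\<lambda>i j k. (if i = 1 \<and> j = 2 \<and> k = 2 then 2 else 0))\<rparr>"

lemma E4_f:
  "ngen E4 = 2"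
  "prel E4 = (\<lambda>k. (if k = 1 then None else (if k = 2 then None else None)))"
  "pexp E4 = (\<lambda>i k. 0)"
  "pconj E4 = (\<lambda>i j k. (if i = 1 \<and> j = 2 \<and> k = 2 then 1 else 0))"
  "piconj E4 = (\<lambda>i j k. (if i = 1 \<and> j = 2 \<and> k = 2 then 2 else 0))"
  by (simp_all add: E4_def)

lemma E4_pcp: "is_pcp E4"
  unfolding is_pcp_def in_range_def Let_def E4_f
  by (auto split: if_splits option.splits)

lemma E4_T1: "(\<forall>i j k. 1 \<le> i \<and> i < j \<and> j < k \<and> k \<le> ngen E4 \<longrightarrow> coll E4 T ([gen j] @ gvec E4 (pconj E4 j k) j @ [gen i]) = coll E4 T [gen k, gen j, gen i])"
proof (intro allI impI)
  fix i j k
  assume h: "1 \<le> i \<and> i < j \<and> j < k \<and> k \<le> ngen E4"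
  then have "False" unfolding E4_f by arith
  then show "coll E4 T ([gen j] @ gvec E4 (pconj E4 j k) j @ [gen i]) = coll E4 T [gen k, gen j, gen i]"
    using h
    apply ((elim disjE)?; clarsimp simp: E4_f gen_def geninv_def csimps)
    apply ((subst coll_unfold, simp add: E4_f gen_def geninv_def csimps cong: option.case_cong_weak)+)?
    done
qed

lemma E4_T2: "(\<forall>i j r. 1 \<le> i \<and> i < j \<and> j \<le> ngen E4 \<and> prel E4 j = Some r \<longrightarrow> coll E4 T (replicate r (gen j) @ [gen i]) = coll E4 T (gvec E4 (pexp E4 j) j @ [gen i]))"
proof (intro allI impI)
  fix i j r
  assume h: "1 \<le> i \<and> i < j \<and> j \<le> ngen E4 \<and> prel E4 j = Some r"
  then have "i = 1 \<and> j = 2" unfolding E4_f by arith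
  then show "coll E4 T (replicate r (gen j) @ [gen i]) = coll E4 T (gvec E4 (pexp E4 j) j @ [gen i])"
    using h
    apply ((elim disjE)?; clarsimp simp: E4_f gen_def geninv_def csimps)
    apply ((subst coll_unfold, simp add: E4_f gen_def geninv_def csimps cong: option.case_cong_weak)+)?
    done
qed

lemma E4_T3: "(\<forall>i j r. 1 \<le> i \<and> i < j \<and> j \<le> ngen E4 \<and> prel E4 i = Some r \<longrightarrow> coll E4 T (gen j # replicate r (gen i)) = coll E4 T (gen j # gvec E4 (pexp E4 i) i))"
proof (intro allI impI)
  fix i j r
  assume h: "1 \<le> i \<and> i < j \<and> j \<le> ngen E4 \<and> prel E4 i = Some r"
  then have "i = 1 \<and> j = 2" unfolding E4_f by arith
  then show "coll E4 T (gen j # replicate r (gen i)) = coll E4 T (gen j # gvec E4 (pexp E4 i) i)"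
    using h
    apply ((elim disjE)?; clarsimp simp: E4_f gen_def geninv_def csimps)
    apply ((subst coll_unfold, simp add: E4_f gen_def geninv_def csimps cong: option.case_cong_weak)+)?
    done
qed

lemma E4_nT4: "\<not> (\<forall>i j. 1 \<le> i \<and> i < j \<and> j \<le> ngen E4 \<and> prel E4 i = None \<longrightarrow> coll E4 T [gen j, geninv i, gen i] = coll E4 T [gen j])"
  apply (simp only: not_all not_imp)
  apply (rule exI[of _ 1], rule exI[of _ 2])
  apply (simp add: E4_f gen_def geninv_def csimps)
  apply ((subst coll_unfold, simp add: E4_f gen_def geninv_def csimps cong: option.case_cong_weak)+)?
  done

lemma E4_T5: "(\<forall>i r. 1 \<le> i \<and> i \<le> ngen E4 \<and> prel E4 i = Some r \<longrightarrow> coll E4 T (replicate (Suc r) (gen i)) = coll E4 T (gen i # gvec E4 (pexp E4 i) i))"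
proof (intro allI impI)
  fix i r
  assume h: "1 \<le> i \<and> i \<le> ngen E4 \<and> prel E4 i = Some r"
  then have "i = 1 \<or> i = 2" unfolding E4_f by arith
  then show "coll E4 T (replicate (Suc r) (gen i)) = coll E4 T (gen i # gvec E4 (pexp E4 i) i)"
    using h
    apply ((elim disjE)?; clarsimp simp: E4_f gen_def geninv_def csimps)
    apply ((subst coll_unfold, simp add: E4_f gen_def geninv_def csimps cong: option.case_cong_weak)+)?
    done
qed

definition E5 :: pcp where "E5 = \<lparr>ngen = 2,
  prel = (\<lambda>k. (if k = 1 then Some 2 else (if k = 2 then Some 3 else None))),
  pexp = (\<lambda>i k. (if i = 1 \<and> k = 2 then 1 else 0)),
  pconj = (\<lambda>i j k. (if i = 1 \<and> j = 2 \<and> k = 2 then 2 else 0)),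
  piconj = (\<lambda>i j k. 0)\<rparr>"

lemma E5_f:
  "ngen E5 = 2"
  "prel E5 = (\<lambda>k. (if k = 1 then Some 2 else (if k = 2 then Some 3 else None)))"
  "pexp E5 = (\<lambda>i k. (if i = 1 \<and> k = 2 then 1 else 0))"
  "pconj E5 = (\<lambda>i j k. (if i = 1 \<and> j = 2 \<and> k = 2 then 2 else 0))"
  "piconj E5 = (\<lambda>i j k. 0)"
  by (simp_all add: E5_def)

lemma E5_pcp: "is_pcp E5"
  unfolding is_pcp_def in_range_def Let_def E5_f
  by (auto split: if_splits option.splits)

lemma E5_T1: "(\<forall>i j k. 1 \<le> i \<and> i < j \<and> j < k \<and> k \<le> ngen E5 \<longrightarrow> coll E5 T ([gen j] @ gvec E5 (pconj E5 j k) j @ [gen i]) = coll E5 T [gen k, gen j, gen i])"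
proof (intro allI impI)
  fix i j k
  assume h: "1 \<le> i \<and> i < j \<and> j < k \<and> k \<le> ngen E5"
  then have "False" unfolding E5_f by arith
  then show "coll E5 T ([gen j] @ gvec E5 (pconj E5 j k) j @ [gen i]) = coll E5 T [gen k, gen j, gen i]"
    using h
    apply ((elim disjE)?; clarsimp simp: E5_f gen_def geninv_def csimps)
    apply ((subst coll_unfold, simp add: E5_f gen_def geninv_def csimps cong: option.case_cong_weak)+)?
    done
qed

lemma E5_T2: "(\<forall>i j r. 1 \<le> i \<and> i < j \<and> j \<le> ngen E5 \<and> prel E5 j = Some r \<longrightarrow> coll E5 T (replicate r (gen j) @ [gen i]) = coll E5 T (gvec E5 (pexp E5 j) j @ [gen i]))"
proof (intro allI impI)
  fix i j r
  assume h: "1 \<le> i \<and> i < j \<and> j \<le> ngen E5 \<and> prel E5 j = Some r"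
  then have "i = 1 \<and> j = 2" unfolding E5_f by arith
  then show "coll E5 T (replicate r (gen j) @ [gen i]) = coll E5 T (gvec E5 (pexp E5 j) j @ [gen i])"
    using h
    apply ((elim disjE)?; clarsimp simp: E5_f gen_def geninv_def csimps)
    apply ((subst coll_unfold, simp add: E5_f gen_def geninv_def csimps cong: option.case_cong_weak)+)?
    done
qed

lemma E5_T3: "(\<forall>i j r. 1 \<le> i \<and> i < j \<and> j \<le> ngen E5 \<and> prel E5 i = Some r \<longrightarrow> coll E5 T (gen j # replicate r (gen i)) = coll E5 T (gen j # gvec E5 (pexp E5 i) i))"
proof (intro allI impI)
  fix i j r
  assume h: "1 \<le> i \<and> i < j \<and> j \<le> ngen E5 \<and> prel E5 i = Some r"
  then have "i = 1 \<and> j = 2" unfolding E5_f by arith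
  then show "coll E5 T (gen j # replicate r (gen i)) = coll E5 T (gen j # gvec E5 (pexp E5 i) i)"
    using h
    apply ((elim disjE)?; clarsimp simp: E5_f gen_def geninv_def csimps)
    apply ((subst coll_unfold, simp add: E5_f gen_def geninv_def csimps cong: option.case_cong_weak)+)?
    done
qed

lemma E5_T4: "(\<forall>i j. 1 \<le> i \<and> i < j \<and> j \<le> ngen E5 \<and> prel E5 i = None \<longrightarrow> coll E5 T [gen j, geninv i, gen i] = coll E5 T [gen j])"
proof (intro allI impI)
  fix i j
  assume h: "1 \<le> i \<and> i < j \<and> j \<le> ngen E5 \<and> prel E5 i = None"
  then have "i = 1 \<and> j = 2" unfolding E5_f by arith
  then show "coll E5 T [gen j, geninv i, gen i] = coll E5 T [gen j]"
    using h
    apply ((elim disjE)?; clarsimp simp: E5_f gen_def geninv_def csimps)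
    apply ((subst coll_unfold, simp add: E5_f gen_def geninv_def csimps cong: option.case_cong_weak)+)?
    done
qed

lemma E5_nT5: "\<not> (\<forall>i r. 1 \<le> i \<and> i \<le> ngen E5 \<and> prel E5 i = Some r \<longrightarrow> coll E5 T (replicate (Suc r) (gen i)) = coll E5 T (gen i # gvec E5 (pexp E5 i) i))"
  apply (simp only: not_all not_imp)
  apply (rule exI[of _ 1], rule exI[of _ 2])
  apply (simp add: E5_f gen_def geninv_def csimps)
  apply ((subst coll_unfold, simp add: E5_f gen_def geninv_def csimps cong: option.case_cong_weak)+)?
  done

lemma E1_main: "is_pcp E1 \<and> \<not> test_eqs E1 1 \<and> (\<forall>s \<in> {1..5::nat}. s \<noteq> 1 \<longrightarrow> test_eqs E1 s)"
proof -
  have n: "\<not> T1 E1" unfolding T1_def collect_def using E1_nT1[of "tabs E1 (ngen E1)"] by blast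
  have h2: "T2 E1" unfolding T2_def collect_def using E1_T2[of "tabs E1 (ngen E1)"] by blast
  have h3: "T3 E1" unfolding T3_def collect_def using E1_T3[of "tabs E1 (ngen E1)"] by blast
  have h4: "T4 E1" unfolding T4_def collect_def using E1_T4[of "tabs E1 (ngen E1)"] by blast
  have h5: "T5 E1" unfolding T5_def collect_def using E1_T5[of "tabs E1 (ngen E1)"] by blast
  have "s \<in> {1..5::nat} \<Longrightarrow> s \<noteq> 1 \<Longrightarrow> test_eqs E1 s" for s
    using h2 h3 h4 h5 by (auto simp: test_eqs_def)
  then show ?thesis using E1_pcp n by (auto simp: test_eqs_def)
qed
lemma E2_main: "is_pcp E2 \<and> \<not> test_eqs E2 2 \<and> (\<forall>s \<in> {1..5::nat}. s \<noteq> 2 \<longrightarrow> test_eqs E2 s)"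
proof -
  have h1: "T1 E2" unfolding T1_def collect_def using E2_T1[of "tabs E2 (ngen E2)"] by blast
  have n: "\<not> T2 E2" unfolding T2_def collect_def using E2_nT2[of "tabs E2 (ngen E2)"] by blast
  have h3: "T3 E2" unfolding T3_def collect_def using E2_T3[of "tabs E2 (ngen E2)"] by blast
  have h4: "T4 E2" unfolding T4_def collect_def using E2_T4[of "tabs E2 (ngen E2)"] by blast
  have h5: "T5 E2" unfolding T5_def collect_def using E2_T5[of "tabs E2 (ngen E2)"] by blast
  have "s \<in> {1..5::nat} \<Longrightarrow> s \<noteq> 2 \<Longrightarrow> test_eqs E2 s" for s
    using h1 h3 h4 h5 by (auto simp: test_eqs_def)
  then show ?thesis using E2_pcp n by (auto simp: test_eqs_def)
qed
lemma E3_main: "is_pcp E3 \<and> \<not> test_eqs E3 3 \<and> (\<forall>s \<in> {1..5::nat}. s \<noteq> 3 \<longrightarrow> test_eqs E3 s)"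
proof -
  have h1: "T1 E3" unfolding T1_def collect_def using E3_T1[of "tabs E3 (ngen E3)"] by blast
  have h2: "T2 E3" unfolding T2_def collect_def using E3_T2[of "tabs E3 (ngen E3)"] by blast
  have n: "\<not> T3 E3" unfolding T3_def collect_def using E3_nT3[of "tabs E3 (ngen E3)"] by blast
  have h4: "T4 E3" unfolding T4_def collect_def using E3_T4[of "tabs E3 (ngen E3)"] by blast
  have h5: "T5 E3" unfolding T5_def collect_def using E3_T5[of "tabs E3 (ngen E3)"] by blast
  have "s \<in> {1..5::nat} \<Longrightarrow> s \<noteq> 3 \<Longrightarrow> test_eqs E3 s" for s
    using h1 h2 h4 h5 by (auto simp: test_eqs_def)
  then show ?thesis using E3_pcp n by (auto simp: test_eqs_def)
qed
lemma E4_main: "is_pcp E4 \<and> \<not> test_eqs E4 4 \<and> (\<forall>s \<in> {1..5::nat}. s \<noteq> 4 \<longrightarrow> test_eqs E4 s)"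
proof -
  have h1: "T1 E4" unfolding T1_def collect_def using E4_T1[of "tabs E4 (ngen E4)"] by blast
  have h2: "T2 E4" unfolding T2_def collect_def using E4_T2[of "tabs E4 (ngen E4)"] by blast
  have h3: "T3 E4" unfolding T3_def collect_def using E4_T3[of "tabs E4 (ngen E4)"] by blast
  have n: "\<not> T4 E4" unfolding T4_def collect_def using E4_nT4[of "tabs E4 (ngen E4)"] by blast
  have h5: "T5 E4" unfolding T5_def collect_def using E4_T5[of "tabs E4 (ngen E4)"] by blast
  have "s \<in> {1..5::nat} \<Longrightarrow> s \<noteq> 4 \<Longrightarrow> test_eqs E4 s" for s
    using h1 h2 h3 h5 by (auto simp: test_eqs_def)
  then show ?thesis using E4_pcp n by (auto simp: test_eqs_def)
qed
lemma E5_main: "is_pcp E5 \<and> \<not> test_eqs E5 5 \<and> (\<forall>s \<in> {1..5::nat}. s \<noteq> 5 \<longrightarrow> test_eqs E5 s)"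
proof -
  have h1: "T1 E5" unfolding T1_def collect_def using E5_T1[of "tabs E5 (ngen E5)"] by blast
  have h2: "T2 E5" unfolding T2_def collect_def using E5_T2[of "tabs E5 (ngen E5)"] by blast
  have h3: "T3 E5" unfolding T3_def collect_def using E5_T3[of "tabs E5 (ngen E5)"] by blast
  have h4: "T4 E5" unfolding T4_def collect_def using E5_T4[of "tabs E5 (ngen E5)"] by blast
  have n: "\<not> T5 E5" unfolding T5_def collect_def using E5_nT5[of "tabs E5 (ngen E5)"] by blast
  have "s \<in> {1..5::nat} \<Longrightarrow> s \<noteq> 5 \<Longrightarrow> test_eqs E5 s" for s
    using h1 h2 h3 h4 by (auto simp: test_eqs_def)
  then show ?thesis using E5_pcp n by (auto simp: test_eqs_def)
qed
theorem proposition18: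
  shows "\<forall>t \<in> {1..5::nat}. \<exists>P. is_pcp P \<and> \<not> test_eqs P t \<and>
           (\<forall>s \<in> {1..5::nat}. s \<noteq> t \<longrightarrow> test_eqs P s)"
proof
  fix t :: nat
  assume "t \<in> {1..5}"
  then have "t = 1 \<or> t = 2 \<or> t = 3 \<or> t = 4 \<or> t = 5" by auto
  then show "\<exists>P. is_pcp P \<and> \<not> test_eqs P t \<and> (\<forall>s \<in> {1..5::nat}. s \<noteq> t \<longrightarrow> test_eqs P s)"
    using E1_main E2_main E3_main E4_main E5_main by blast
qed

end
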